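(* Let $d\ge2$ and let $A$ be a subset of $\Delta\cap B_{\rm o}$. Then (1) $A$ is a germ if and only if $A\subseteq A^*$; (2) $A$ is a maximal germ if and only if $A=A^*$. In particular, a subset of $\Delta$ is a maximal germ if and only if it is a qplex.
   Context: Fix an integer $d\ge 2$. $\langle\cdot,\cdot\rangle$ is the standard inner product on $\mathbb{R}^{d^2}$, $\|\cdot\|$ the Euclidean norm. $\Delta=\{p\in\mathbb{R}^{d^2}: p(i)\ge0,\ \sum_ip(i)=1\}$; $H=\{u\in\mathbb{R}^{d^2}:\sum_i u(i)=1\}$; $c=(1/d^2,\dots,1/d^2)$. For $A\subseteq H$ the polar is $A^*=\{u\in H:\langle u,v\rangle\ge\frac{1}{d(d+1)}\ \forall v\in A\}$. The out-ball is $B_{\rm o}=\{u\in H:\|u-c\|\le r_{\rm o}\}$ with $r_{\rm o}^2=\frac{d-1}{d^2(d+1)}$ (equivalently $\langle u,u\rangle\le\frac{2}{d(d+1)}$). A subset $A\subseteq\Delta$ is a germ if $\frac{1}{d(d+1)}\le\langle p,s\rangle\le\frac{2}{d(d+1)}$ for all $p,s\in A$ (including $p=s$); a germ is maximal if no point of $\Delta$ can be added to it while keeping it a germ. A qplex is a set $Q\subseteq\Delta\cap B_{\rm o}$ with $Q^*=Q$. *)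

theory Defs
  imports Main "HOL-Library.Cardinality" Complex_Main
begin

text \<open>Vectors in R^(d^2) are functions from a finite index type 'n with CARD('n) = d^2.\<close>

definition ip :: "('n::finite \<Rightarrow> real) \<Rightarrow> ('n \<Rightarrow> real) \<Rightarrow> real" where
  "ip u v = (\<Sum>i\<in>UNIV. u i * v i)"

definition vnorm :: "('n::finite \<Rightarrow> real) \<Rightarrow> real" where
  "vnorm u = sqrt (ip u u)"

definition simplex :: "('n::finite \<Rightarrow> real) set" where
  "simplex = {p. (\<forall>i. 0 \<le> p i) \<and> (\<Sum>i\<in>UNIV. p i) = 1}"

definition hyp :: "('n::finite \<Rightarrow> real) set" where
  "hyp = {u. (\<Sum>i\<in>UNIV. u i) = 1}"

definition center :: "'n::finite \<Rightarrow> real" where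
  "center = (\<lambda>i. 1 / real (CARD('n)))"

definition polar :: "nat \<Rightarrow> ('n::finite \<Rightarrow> real) set \<Rightarrow> ('n \<Rightarrow> real) set" where
  "polar d A = {u \<in> hyp. \<forall>v\<in>A. ip u v \<ge> 1 / (real d * (real d + 1))}"

definition outball :: "nat \<Rightarrow> ('n::finite \<Rightarrow> real) set" where
  "outball d = {u \<in> hyp. vnorm (\<lambda>i. u i - center i)
      \<le> sqrt ((real d - 1) / ((real d)^2 * (real d + 1)))}"

definition germ :: "nat \<Rightarrow> ('n::finite \<Rightarrow> real) set \<Rightarrow> bool" where
  "germ d A \<longleftrightarrow> A \<subseteq> simplex \<and>
     (\<forall>p\<in>A. \<forall>s\<in>A. 1 / (real d * (real d + 1)) \<le> ip p s \<and> ip p s \<le> 2 / (real d * (real d + 1)))"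

definition maximal_germ :: "nat \<Rightarrow> ('n::finite \<Rightarrow> real) set \<Rightarrow> bool" where
  "maximal_germ d A \<longleftrightarrow> germ d A \<and> (\<forall>p\<in>simplex. p \<notin> A \<longrightarrow> \<not> germ d (insert p A))"

definition qplex :: "nat \<Rightarrow> ('n::finite \<Rightarrow> real) set \<Rightarrow> bool" where
  "qplex d Q \<longleftrightarrow> Q \<subseteq> simplex \<inter> outball d \<and> polar d Q = Q"

end

theory Submission
  imports Defs "HOL-Analysis.Convex"
begin

context fixes x :: real assumes x2: "x \<ge> 2" begin
lemma pos: "x > 0" "x + 1 > 0" "x - 1 > 0" "x*x > 0" "x + x * x > 0" "x*x + x*(x*x) > 0" "x*x*x > 0" "x*x*(x*x) > 0"
  using x2 by (auto simp: add_pos_pos)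
lemma nz: "x \<noteq> 0" "x + 1 \<noteq> 0" "x - 1 \<noteq> 0" "x*x \<noteq> 1" "x^2 \<noteq> 0" "x * (x+1) \<noteq> 0" "x^2 * (x+1) \<noteq> 0"
proof -
  have "2*2 \<le> x*x" using x2 by (intro mult_mono) auto
  thus "x*x \<noteq> 1" by auto
qed (use x2 in \<open>auto simp: power2_eq_square\<close>)
lemma q2: "1 / (x * (x + 1)) + 1/(x+1) * (1 / (x * (x + 1))) + (1/(x+1))^2 = 2 / (x * (x + 1))"
proof -
  define D where "D = x * (x+1) * (x+1)"
  have D: "D \<noteq> 0" using nz unfolding D_def by simp
  have e1: "1 / (x * (x + 1)) = (x+1) / D" using nz unfolding D_def by simp
  have e2: "1/(x+1) * (1 / (x * (x + 1))) = 1 / D" unfolding D_def by simp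
  have e3: "(1/(x+1))^2 = x / D" using nz unfolding D_def by (simp add: power2_eq_square)
  have e4: "2 / (x * (x + 1)) = (2*x+2) / D"
  proof -
    have "(2*x+2) / D = (2*(x+1)) / ((x*(x+1))*(x+1))" by (simp add: D_def algebra_simps)
    also have "\<dots> = 2 / (x*(x+1))" by (rule nonzero_mult_divide_mult_cancel_right) (use nz in simp)
    finally show ?thesis by simp
  qed
  show ?thesis unfolding e1 e2 e3 e4 using D nz by (simp add: add_divide_distrib[symmetric])
qed
lemma r6: "(1 / (x^2 * (x + 1))) / (x - 1) * (x^2 - 1) / x^2 = (1 / x^2)^2"
proof -
  have "x^2 - 1 = (x - 1) * (x + 1)" by (simp add: algebra_simps power2_eq_square)
  hence "(1 / (x^2 * (x + 1))) / (x - 1) * (x^2 - 1) / x^2 = 1 / (x^2 * x^2)"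
    using nz by (simp add: field_simps)
  thus ?thesis by (simp add: power2_eq_square)
qed
lemma r9: "sqrt ((1 / (x^2 * (x + 1))) / (x - 1)) * sqrt ((x - 1) / (x^2 * (x + 1))) = 1 / (x^2 * (x + 1))"
proof -
  have "(1 / (x^2 * (x + 1))) / (x - 1) * ((x - 1) / (x^2 * (x + 1))) = (1 / (x^2 * (x + 1)))^2"
    using nz by (simp add: power2_eq_square)
  thus ?thesis using pos by (simp add: real_sqrt_mult[symmetric])
qed
lemma r1: "(x - 1) / (x^2 * (x + 1)) + 1 / x^2 = 2 / (x * (x + 1))"
  using pos by (simp add: field_split_simps power2_eq_square)
lemma r2: "1 / (x * (x + 1)) \<le> 1 / x^2"
  using pos by (intro divide_left_mono) (auto simp: power2_eq_square)
lemma q1: "x^2 * (1 / (x * (x + 1))) + 1 / (x+1) = 1"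
  using pos by (simp add: field_split_simps power2_eq_square)
lemma r7: "1 / x^2 - 1 / (x^2 * (x + 1)) = 1 / (x * (x + 1))"
  using pos by (simp add: field_split_simps power2_eq_square)
lemma r8: "1 / x^2 + (1 / (x^2 * (x + 1))) / (x - 1) \<le> 2 / (x * (x + 1))"
proof -
  have k: "1 / (x^2 * (x + 1)) \<ge> 0" using pos by simp
  have "1 / (x - 1) \<le> x - 1" using x2 by (simp add: field_split_simps)
  hence "(1 / (x^2 * (x + 1))) * (1 / (x - 1)) \<le> (1 / (x^2 * (x + 1))) * (x - 1)"
    using k by (rule mult_left_mono)
  hence "(1 / (x^2 * (x + 1))) / (x - 1) \<le> (x - 1) / (x^2 * (x + 1))" by simp
  thus ?thesis using r1 by linarith
qed
end



lemma ip_comm: "ip u v = ip v u"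
  unfolding ip_def by (simp add: mult.commute)

lemma ip_self_nonneg: "0 \<le> ip u u"
  unfolding ip_def by (simp add: sum_nonneg)

lemma vnorm_sq: "(vnorm u)^2 = ip u u"
  unfolding vnorm_def using ip_self_nonneg by simp

lemma ip_cs: "ip u v \<le> vnorm u * vnorm v"
proof -
  have "(ip u v)^2 \<le> ip u u * ip v v"
    unfolding ip_def using Cauchy_Schwarz_ineq_sum[of u v UNIV] by (simp add: power2_eq_square)
  hence "\<bar>ip u v\<bar> \<le> sqrt (ip u u * ip v v)"
    using real_sqrt_le_mono by fastforce
  thus ?thesis unfolding vnorm_def by (simp add: real_sqrt_mult)
qed

lemma ip_half: "ip u v \<le> (ip u u + ip v v) / 2"
proof -
  have "0 \<le> (\<Sum>i\<in>UNIV. (u i - v i)^2)" by (simp add: sum_nonneg)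
  also have "\<dots> = ip u u + ip v v - 2 * ip u v"
    unfolding ip_def by (simp add: power2_eq_square algebra_simps sum.distrib sum_subtractf sum_distrib_left sum_divide_distrib)
  finally show ?thesis by simp
qed

lemma ip_center_sq:
  fixes u :: "'n::finite \<Rightarrow> real"
  assumes "u \<in> hyp"
  shows "ip (\<lambda>i. u i - center i) (\<lambda>i. u i - center i) = ip u u - 1 / real CARD('n)"
proof -
  have s: "(\<Sum>i\<in>UNIV. u i) = 1" using assms unfolding hyp_def by simp
  have "ip (\<lambda>i. u i - center i) (\<lambda>i. u i - center i)
      = ip u u - 2 / real CARD('n) * (\<Sum>i\<in>UNIV. u i) + real CARD('n) * (1 / real CARD('n))^2"
    unfolding ip_def center_def
    by (simp add: power2_eq_square algebra_simps sum.distrib sum_subtractf sum_distrib_left sum_divide_distrib)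
      (simp add: sum_divide_distrib sum_distrib_right)
  also have "\<dots> = ip u u - 1 / real CARD('n)"
    using s by (simp add: power2_eq_square)
  finally show ?thesis .
qed

lemma ip_hyp_lower:
  fixes u :: "'n::finite \<Rightarrow> real"
  assumes "u \<in> hyp" shows "1 / real CARD('n) \<le> ip u u"
  using ip_center_sq[OF assms] ip_self_nonneg[of "\<lambda>i. u i - center i"] by simp

lemma coord_bound:
  fixes v :: "'n::finite \<Rightarrow> real"
  assumes "(\<Sum>i\<in>UNIV. v i) = 0"
  shows "real CARD('n) * (v j)^2 \<le> (real CARD('n) - 1) * ip v v"
proof -
  let ?B = "UNIV - {j}"
  have c: "card ?B = CARD('n) - 1" by simp
  have "(\<Sum>i\<in>?B. v i)^2 \<le> (\<Sum>i\<in>?B. (v i)^2) * card ?B"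
    by (rule sum_squared_le_sum_of_squares)
  moreover have "(\<Sum>i\<in>?B. v i) = - v j"
    using assms sum.remove[of UNIV j v] by simp
  moreover have "(\<Sum>i\<in>?B. (v i)^2) = ip v v - (v j)^2"
    unfolding ip_def using sum.remove[of UNIV j "\<lambda>i. (v i)^2"] by (simp add: power2_eq_square)
  moreover have "real (card ?B) = real CARD('n) - 1"
    using c by (simp add: of_nat_diff Suc_leI)
  ultimately have "(v j)^2 \<le> (ip v v - (v j)^2) * (real CARD('n) - 1)" by simp
  thus ?thesis by (simp add: algebra_simps)
qed




lemma ip_diff: "ip (\<lambda>i. x i - y i) z = ip x z - ip y z"
  unfolding ip_def by (simp add: algebra_simps sum_subtractf)

lemma ip_scale: "ip (\<lambda>i. c * x i) z = c * ip x z"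
  unfolding ip_def by (simp add: algebra_simps sum_distrib_left)

lemma ip_center: "ip (center :: 'n::finite \<Rightarrow> real) z = (\<Sum>i\<in>UNIV. z i) / real CARD('n)"
  unfolding ip_def center_def by (simp add: sum_divide_distrib)

lemma hyp_sum: "u \<in> hyp \<Longrightarrow> (\<Sum>i\<in>UNIV. u i) = 1"
  unfolding hyp_def by simp

lemma simplex_hyp: "simplex \<subseteq> hyp"
  unfolding simplex_def hyp_def by auto

lemma outball_iff:
  fixes u :: "'n::finite \<Rightarrow> real"
  assumes d: "d \<ge> 2" and card: "CARD('n) = d^2" and u: "u \<in> hyp"
  shows "u \<in> outball d \<longleftrightarrow> ip u u \<le> 2 / (real d * (real d + 1))"
proof -
  have N: "real CARD('n) = (real d)^2" using card by simp
  have e: "(real d - 1) / ((real d)^2 * (real d + 1)) + 1 / (real d)^2 = 2 / (real d * (real d + 1))"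
    using r1[of "real d"] d by simp
  have "u \<in> outball d \<longleftrightarrow> ip (\<lambda>i. u i - center i) (\<lambda>i. u i - center i) \<le> (real d - 1) / ((real d)^2 * (real d + 1))"
    using u unfolding outball_def vnorm_def by (simp add: real_sqrt_le_iff)
  also have "\<dots> \<longleftrightarrow> ip u u \<le> 2 / (real d * (real d + 1))"
  proof -
    have "1 / real CARD('n) = 1 / (real d)^2" using N by simp
    thus ?thesis using ip_center_sq[OF u] e by linarith
  qed
  finally show ?thesis .
qed

lemma half_le: "(a::real) \<le> (p+q)/2 \<Longrightarrow> p \<le> t \<Longrightarrow> q \<le> t \<Longrightarrow> a \<le> t" by (simp add: field_simps)

lemma add_lemma:
  fixes A :: "('n::finite \<Rightarrow> real) set"
  assumes d: "d \<ge> 2" and card: "CARD('n) = d^2" and mg: "maximal_germ d A"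
    and x: "x \<in> simplex" and xx: "ip x x \<le> 2 / (real d * (real d + 1))"
    and xb: "\<forall>b\<in>A. 1 / (real d * (real d + 1)) \<le> ip x b"
  shows "x \<in> A"
proof (rule ccontr)
  assume nx: "x \<notin> A"
  have g: "germ d A" using mg unfolding maximal_germ_def by simp
  have N: "real CARD('n) = (real d)^2" using card by simp
  have "1 / real CARD('n) \<le> ip x x" using ip_hyp_lower x simplex_hyp by blast
  moreover have "1 / (real d * (real d + 1)) \<le> 1 / (real d)^2"
    using r2[of "real d"] d by simp
  ultimately have xl: "1 / (real d * (real d + 1)) \<le> ip x x" using N by simp
  have "germ d (insert x A)"
    unfolding germ_def
  proof (rule conjI)
    show "insert x A \<subseteq> simplex" using g x unfolding germ_def by auto
  next
    show "\<forall>p\<in>insert x A. \<forall>s\<in>insert x A. 1 / (real d * (real d + 1)) \<le> ip p s \<and> ip p s \<le> 2 / (real d * (real d + 1))"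
    proof (intro ballI)
    fix p s assume p: "p \<in> insert x A" and s: "s \<in> insert x A"
    have bb: "\<And>b. b \<in> A \<Longrightarrow> ip b b \<le> 2 / (real d * (real d + 1))"
      using g unfolding germ_def by blast
    have up: "ip x b \<le> 2 / (real d * (real d + 1))" if "b \<in> A" for b
      using half_le[OF ip_half[of x b] xx bb[OF that]] .
    show "1 / (real d * (real d + 1)) \<le> ip p s \<and> ip p s \<le> 2 / (real d * (real d + 1))"
    proof -
      have gA: "\<forall>p\<in>A. \<forall>s\<in>A. 1 / (real d * (real d + 1)) \<le> ip p s \<and> ip p s \<le> 2 / (real d * (real d + 1))"
        using g unfolding germ_def by blast
      consider "p = x" "s = x" | "p = x" "s \<in> A" | "p \<in> A" "s = x" | "p \<in> A" "s \<in> A"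
        using p s by blast
      thus ?thesis
      proof cases
        case 1 thus ?thesis using xl xx by simp
      next
        case 2 thus ?thesis using xb up by simp
      next
        case 3 thus ?thesis using xb up ip_comm[of p x] by simp
      next
        case 4 thus ?thesis using gA by blast
      qed
    qed
    qed
  qed
  thus False using mg x nx unfolding maximal_germ_def by blast
qed




lemma ip_qvec:
  "ip (\<lambda>i. K + (if i = j then s else 0)) b = K * (\<Sum>i\<in>UNIV. b i) + s * b j"
proof -
  have "ip (\<lambda>i. K + (if i = j then s else 0)) b = (\<Sum>i\<in>UNIV. K * b i + (if i = j then s * b i else 0))"
    unfolding ip_def by (rule sum.cong) (auto simp: algebra_simps)
  also have "\<dots> = K * (\<Sum>i\<in>UNIV. b i) + s * b j"
    by (simp add: sum.distrib sum_distrib_left)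
  finally show ?thesis .
qed

lemma sum_center: "(\<Sum>i\<in>UNIV. (center::'n::finite\<Rightarrow>real) i) = 1"
  unfolding center_def by simp

lemma polar_sub:
  fixes A :: "('n::finite \<Rightarrow> real) set"
  assumes d: "d \<ge> 2" and card: "CARD('n) = d^2" and mg: "maximal_germ d A"
    and Asub: "A \<subseteq> simplex \<inter> outball d" and u: "u \<in> polar d A"
  shows "u \<in> A"
proof -
  define x where "x = real d"
  have x2: "x \<ge> 2" using d x_def by simp
  define K where "K = 1 / (x * (x + 1))"
  define T where "T = 2 / (x * (x + 1))"
  define k where "k = 1 / (x^2 * (x + 1))"
  have N: "real CARD('n) = x^2" using card x_def by simp
  have uh: "u \<in> hyp" using u unfolding polar_def by simp
  have uA: "\<forall>b\<in>A. K \<le> ip u b" using u unfolding polar_def K_def x_def by simp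
  have Ah: "\<And>b. b \<in> A \<Longrightarrow> b \<in> hyp" using Asub simplex_hyp by blast
  have As: "\<And>b. b \<in> A \<Longrightarrow> b \<in> simplex" using Asub by blast
  have Aob: "\<And>b. b \<in> A \<Longrightarrow> b \<in> outball d" using Asub by blast
  have add: "\<And>y. y \<in> simplex \<Longrightarrow> ip y y \<le> T \<Longrightarrow> (\<forall>b\<in>A. K \<le> ip y b) \<Longrightarrow> y \<in> A"
    using add_lemma[OF d card mg] unfolding K_def T_def x_def by blast
  have su: "(\<Sum>i\<in>UNIV. u i) = 1" using hyp_sum[OF uh] .
  have nonneg: "0 \<le> u j" for j
  proof -
    define s where "s = 1 / (x + 1)"
    define q where "q = (\<lambda>i. K + (if i = j then s else 0))"
    have Kpos: "K > 0" "s > 0" using pos[OF x2] unfolding K_def s_def by auto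
    have ipq: "ip q b = K * (\<Sum>i\<in>UNIV. b i) + s * b j" for b
      unfolding q_def by (rule ip_qvec)
    have "(\<Sum>i\<in>UNIV. q i) = x^2 * K + s"
      unfolding q_def using N by (simp add: sum.distrib)
    hence sq: "(\<Sum>i\<in>UNIV. q i) = 1" using q1[OF x2] unfolding K_def s_def by simp
    have "q \<in> simplex" unfolding simplex_def using sq Kpos unfolding q_def by auto
    moreover have "ip q q \<le> T"
    proof -
      have qj: "q j = K + s" by (simp add: q_def)
      have "ip q q = K + s * K + s^2" using ipq[of q] sq qj by (simp add: algebra_simps power2_eq_square)
      also have "\<dots> = T" using q2[OF x2] unfolding K_def s_def T_def by simp
      finally show ?thesis by simp
    qed
    moreover have "\<forall>b\<in>A. K \<le> ip q b"
    proof
      fix b assume b: "b \<in> A"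
      have "0 \<le> b j" using As[OF b] unfolding simplex_def by simp
      thus "K \<le> ip q b" using ipq[of b] hyp_sum[OF Ah[OF b]] Kpos by simp
    qed
    ultimately have qA: "q \<in> A" using add by blast
    hence "K \<le> ip u q" using uA by blast
    also have "ip u q = K + s * u j" using ip_comm[of u q] ipq[of u] su by simp
    finally have "0 \<le> s * u j" by simp
    thus ?thesis using Kpos by (simp add: zero_le_mult_iff)
  qed
  define v where "v = (\<lambda>i. u i - center i)"
  define n where "n = vnorm v"
  have sv: "(\<Sum>i\<in>UNIV. v i) = 0" unfolding v_def using su sum_center by (simp add: sum_subtractf)
  have vv: "ip v v = ip u u - 1/x^2" using ip_center_sq[OF uh] N unfolding v_def by simp
  have nsq: "n^2 = ip v v" unfolding n_def by (rule vnorm_sq)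
  have n0: "n \<ge> 0" unfolding n_def vnorm_def using ip_self_nonneg by simp
  define R where "R = sqrt ((x - 1) / (x^2 * (x + 1)))"
  define \<rho> where "\<rho> = sqrt (k / (x - 1))"
  have Rrho: "\<rho> * R = k" using r9[OF x2] unfolding R_def \<rho>_def k_def by simp
  have R0: "R \<ge> 0" unfolding R_def using pos[OF x2] by simp
  have rhopos: "\<rho> > 0" unfolding \<rho>_def k_def using pos[OF x2] by simp
  have nR: "n \<le> R"
  proof (cases "n = 0")
    case True then show ?thesis using R0 by simp
  next
    case False
    hence npos: "n > 0" using n0 by simp
    define s where "s = \<rho> / n"
    have s0: "s \<ge> 0" unfolding s_def using rhopos npos by simp
    have sn: "s * n = \<rho>" unfolding s_def using npos by simp
    define a where "a = (\<lambda>i. center i - s * v i)"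
    have ipc: "ip center b = 1/x^2" if "b \<in> hyp" for b :: "'n \<Rightarrow> real"
      using ip_center[of b] hyp_sum[OF that] N by simp
    have ipvc: "ip v center = 0" using ip_comm[of v center] ip_center[of v] sv by simp
    have ipa: "ip a b = ip center b - s * ip v b" for b
      unfolding a_def using ip_diff[of center "\<lambda>i. s * v i" b] ip_scale[of s v b] by simp
    have ipvb: "ip v b \<le> n * R" if b: "b \<in> A" for b
    proof -
      define w where "w = (\<lambda>i. b i - center i)"
      have "ip w v = ip b v - ip center v" unfolding w_def by (rule ip_diff)
      hence "ip v b = ip v w" using ipvc ip_comm[of v b] ip_comm[of v w] ip_comm[of v center] by simp
      also have "\<dots> \<le> vnorm v * vnorm w" by (rule ip_cs)
      also have "\<dots> \<le> n * R"
      proof -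
        have "vnorm w \<le> R" using Aob[OF b] unfolding outball_def w_def R_def x_def by simp
        thus ?thesis unfolding n_def using n0 n_def by (simp add: mult_left_mono)
      qed
      finally show ?thesis .
    qed
    have suma: "(\<Sum>i\<in>UNIV. a i) = 1"
      unfolding a_def using sum_center sv by (simp add: sum_subtractf sum_distrib_left[symmetric])
    have ah: "a \<in> hyp" unfolding hyp_def using suma by simp
    have ai: "0 \<le> a i" for i
    proof -
      have ci: "center i = 1/x^2" unfolding center_def using N by simp
      have "s * v i \<le> 1/x^2"
      proof (cases "v i \<le> 0")
        case True thus ?thesis using s0 by (simp add: mult_nonneg_nonpos order_trans[of _ 0])
      next
        case False
        have cb: "x^2 * (v i)^2 \<le> (x^2 - 1) * n^2" using coord_bound[OF sv, of i] N nsq by simp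
        have xp: "x^2 > 0" using pos[OF x2] by simp
        have "(v i)^2 / n^2 \<le> (x^2 - 1) / x^2"
          using cb xp npos by (simp add: field_simps)
        hence "(k / (x - 1)) * ((v i)^2 / n^2) \<le> (k / (x - 1)) * ((x^2 - 1) / x^2)"
          using pos[OF x2] unfolding k_def by (intro mult_left_mono) auto
        also have "\<dots> = (1/x^2)^2" using r6[OF x2] unfolding k_def by simp
        also have "(k / (x - 1)) * ((v i)^2 / n^2) = (s * v i)^2"
          unfolding s_def \<rho>_def using pos[OF x2] unfolding k_def by (simp add: power_divide power_mult_distrib)
        finally have "(s * v i)^2 \<le> (1/x^2)^2" .
        thus ?thesis by (rule power2_le_imp_le) simp
      qed
      thus ?thesis unfolding a_def using ci by simp
    qed
    have aS: "a \<in> simplex" unfolding simplex_def using ai suma by simp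
    have ipaa: "ip a a \<le> T"
    proof -
      have "ip v a = ip a v" by (rule ip_comm)
      also have "\<dots> = - s * n^2" using ipa[of v] ipvc ip_comm[of center v] nsq by simp
      finally have "ip a a = 1/x^2 + s^2 * n^2" using ipa[of a] ipc[OF ah] by (simp add: power2_eq_square)
      also have "s^2 * n^2 = k / (x - 1)"
      proof -
        have "s^2 * n^2 = \<rho>^2" using sn by (simp add: power_mult_distrib[symmetric])
        also have "\<dots> = k / (x - 1)" unfolding \<rho>_def using pos[OF x2] unfolding k_def by simp
        finally show ?thesis .
      qed
      finally show ?thesis using r8[OF x2] unfolding T_def k_def by simp
    qed
    have aA: "\<forall>b\<in>A. K \<le> ip a b"
    proof
      fix b assume b: "b \<in> A"
      have "s * ip v b \<le> s * (n * R)" using ipvb[OF b] s0 by (rule mult_left_mono)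
      also have "\<dots> = k" using sn Rrho by (simp add: mult.assoc[symmetric])
      finally have "s * ip v b \<le> k" .
      thus "K \<le> ip a b" using ipa[of b] ipc[OF Ah[OF b]] r7[OF x2] unfolding K_def k_def by simp
    qed
    have "a \<in> A" using add[OF aS ipaa aA] .
    hence "K \<le> ip u a" using uA by blast
    also have "ip u a = 1/x^2 - s * n^2"
    proof -
      have "ip v u = ip v v"
        using ip_diff[of u center v] ipvc ip_comm[of v u] ip_comm[of center v] unfolding v_def by simp
      thus ?thesis using ip_comm[of u a] ipa[of u] ipc[OF uh] nsq by simp
    qed
    also have "s * n^2 = \<rho> * n" using sn by (simp add: power2_eq_square)
    finally have "\<rho> * n \<le> \<rho> * R" using r7[OF x2] Rrho unfolding K_def k_def by simp
    thus ?thesis using rhopos by simp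
  qed
  have "ip v v \<le> R^2" using power_mono[OF nR n0, of 2] nsq by simp
  hence "ip u u \<le> T" using vv r1[OF x2] unfolding R_def T_def using pos[OF x2] by simp
  moreover have "u \<in> simplex" unfolding simplex_def using nonneg su by simp
  ultimately show "u \<in> A" using add uA by blast
qed




lemma part1:
  fixes A :: "('n::finite \<Rightarrow> real) set"
  assumes d: "d \<ge> 2" and card: "CARD('n) = d^2" and Asub: "A \<subseteq> simplex \<inter> outball d"
  shows "germ d A \<longleftrightarrow> A \<subseteq> polar d A"
proof
  assume g: "germ d A"
  show "A \<subseteq> polar d A"
  proof
    fix p assume p: "p \<in> A"
    have "p \<in> hyp" using p Asub simplex_hyp by blast
    thus "p \<in> polar d A" using g p unfolding germ_def polar_def by blast
  qed
next
  assume sub: "A \<subseteq> polar d A"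
  have T: "ip p p \<le> 2 / (real d * (real d + 1))" if "p \<in> A" for p
    using outball_iff[OF d card, of p] that Asub simplex_hyp by blast
  show "germ d A" unfolding germ_def
  proof (rule conjI)
    show "A \<subseteq> simplex" using Asub by blast
    show "\<forall>p\<in>A. \<forall>s\<in>A. 1 / (real d * (real d + 1)) \<le> ip p s \<and> ip p s \<le> 2 / (real d * (real d + 1))"
    proof (intro ballI conjI)
      fix p s assume p: "p \<in> A" and s: "s \<in> A"
      show "1 / (real d * (real d + 1)) \<le> ip p s" using sub p s unfolding polar_def by blast
      show "ip p s \<le> 2 / (real d * (real d + 1))"
        using half_le[OF ip_half[of p s] T[OF p] T[OF s]] .
    qed
  qed
qed

lemma part2:
  fixes A :: "('n::finite \<Rightarrow> real) set"
  assumes d: "d \<ge> 2" and card: "CARD('n) = d^2" and Asub: "A \<subseteq> simplex \<inter> outball d"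
  shows "maximal_germ d A \<longleftrightarrow> A = polar d A"
proof
  assume mg: "maximal_germ d A"
  hence "A \<subseteq> polar d A" using part1[OF d card Asub] unfolding maximal_germ_def by simp
  moreover have "polar d A \<subseteq> A" using polar_sub[OF d card mg Asub] by blast
  ultimately show "A = polar d A" by blast
next
  assume eq: "A = polar d A"
  hence g: "germ d A" using part1[OF d card Asub] by simp
  show "maximal_germ d A" unfolding maximal_germ_def
  proof (intro conjI ballI impI)
    show "germ d A" by (rule g)
    fix p assume p: "p \<in> simplex" and np: "p \<notin> A"
    show "\<not> germ d (insert p A)"
    proof
      assume gi: "germ d (insert p A)"
      have "p \<in> hyp" using p simplex_hyp by blast
      hence "p \<in> polar d A" using gi unfolding germ_def polar_def by blast
      thus False using eq np by blast
    qed
  qed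
qed

theorem mainTheorem3:
  fixes d :: nat
  assumes "d \<ge> 2" and "CARD('n::finite) = d^2"
  shows "(\<forall>A :: ('n \<Rightarrow> real) set. A \<subseteq> simplex \<inter> outball d \<longrightarrow>
            ((germ d A \<longleftrightarrow> A \<subseteq> polar d A) \<and> (maximal_germ d A \<longleftrightarrow> A = polar d A)))
       \<and> (\<forall>A :: ('n \<Rightarrow> real) set. A \<subseteq> simplex \<longrightarrow> (maximal_germ d A \<longleftrightarrow> qplex d A))"
proof (intro conjI allI impI)
  fix A :: "('n \<Rightarrow> real) set"
  assume "A \<subseteq> simplex \<inter> outball d"
  thus "germ d A \<longleftrightarrow> A \<subseteq> polar d A" "maximal_germ d A \<longleftrightarrow> A = polar d A"
    using part1[OF assms] part2[OF assms] by auto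
next
  fix A :: "('n \<Rightarrow> real) set"
  assume As: "A \<subseteq> simplex"
  show "maximal_germ d A \<longleftrightarrow> qplex d A"
  proof
    assume mg: "maximal_germ d A"
    have "A \<subseteq> outball d"
    proof
      fix p assume p: "p \<in> A"
      have "ip p p \<le> 2 / (real d * (real d + 1))" using mg p unfolding maximal_germ_def germ_def by blast
      thus "p \<in> outball d" using outball_iff[OF assms, of p] p As simplex_hyp by blast
    qed
    hence sub: "A \<subseteq> simplex \<inter> outball d" using As by blast
    thus "qplex d A" using part2[OF assms sub] mg unfolding qplex_def by simp
  next
    assume "qplex d A"
    thus "maximal_germ d A" using part2[OF assms] unfolding qplex_def by simp
  qed
qed


end
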